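(* There exist continuous functions $g_1,g_2,g_3,g_4:\mathrm{SO}(4)\to S^3\times S^3$ such that for every rotation $R\in\mathrm{SO}(4)$, $\mathbf{R}_{QQ}(g_i(R))=R$ for some $i\in\{1,2,3,4\}$.
   Context: Identify $\mathbb{R}^4$ with the quaternions via $(w,x,y,z)\leftrightarrow w+x\mathbf{i}+y\mathbf{j}+z\mathbf{k}$; $S^3$ is the set of unit quaternions. For $(\mathbf{q}_L,\mathbf{q}_R)\in S^3\times S^3$, $\mathbf{R}_{QQ}(\mathbf{q}_L,\mathbf{q}_R)\in\mathrm{SO}(4)$ is the rotation $\mathbf{p}\mapsto\mathbf{q}_L\mathbf{p}\mathbf{q}_R$ of $\mathbb{R}^4$. *)

theory Defs
  imports "HOL-Analysis.Analysis"
begin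

text \<open>R^4 identified with the quaternions: (w,x,y,z) = vector components 1,2,3,4
  corresponds to w + x i + y j + z k.  Hamilton product:\<close>
definition qmult :: "real^4 \<Rightarrow> real^4 \<Rightarrow> real^4" where
  "qmult p q = vector
     [ p$1 * q$1 - p$2 * q$2 - p$3 * q$3 - p$4 * q$4,
       p$1 * q$2 + p$2 * q$1 + p$3 * q$4 - p$4 * q$3,
       p$1 * q$3 - p$2 * q$4 + p$3 * q$1 + p$4 * q$2,
       p$1 * q$4 + p$2 * q$3 - p$3 * q$2 + p$4 * q$1 ]"

definition S3 :: "(real^4) set" where
  "S3 = sphere 0 1"

definition SO4 :: "(real^4^4) set" where
  "SO4 = {A. orthogonal_matrix A \<and> det A = 1}"

definition R_QQ :: "(real^4) \<times> (real^4) \<Rightarrow> real^4^4" where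
  "R_QQ q = matrix (\<lambda>p. qmult (qmult (fst q) p) (snd q))"

end

theory Submission
  imports Defs
begin

lemma vector_4 [simp]:
 "(vector [x1,x2,x3,x4] ::('a::zero)^4)$1 = x1"
 "(vector [x1,x2,x3,x4] ::('a::zero)^4)$2 = x2"
 "(vector [x1,x2,x3,x4] ::('a::zero)^4)$3 = x3"
 "(vector [x1,x2,x3,x4] ::('a::zero)^4)$4 = x4"
  unfolding vector_def by simp_all

lemma det_4:
  "det (A::'a::comm_ring_1^4^4) =
  A$1$1*A$2$2*A$3$3*A$4$4 - A$1$1*A$2$2*A$3$4*A$4$3 - A$1$1*A$2$3*A$3$2*A$4$4
+ A$1$1*A$2$3*A$3$4*A$4$2 + A$1$1*A$2$4*A$3$2*A$4$3 - A$1$1*A$2$4*A$3$3*A$4$2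
- A$1$2*A$2$1*A$3$3*A$4$4 + A$1$2*A$2$1*A$3$4*A$4$3 + A$1$2*A$2$3*A$3$1*A$4$4
- A$1$2*A$2$3*A$3$4*A$4$1 - A$1$2*A$2$4*A$3$1*A$4$3 + A$1$2*A$2$4*A$3$3*A$4$1
+ A$1$3*A$2$1*A$3$2*A$4$4 - A$1$3*A$2$1*A$3$4*A$4$2 - A$1$3*A$2$2*A$3$1*A$4$4
+ A$1$3*A$2$2*A$3$4*A$4$1 + A$1$3*A$2$4*A$3$1*A$4$2 - A$1$3*A$2$4*A$3$2*A$4$1
- A$1$4*A$2$1*A$3$2*A$4$3 + A$1$4*A$2$1*A$3$3*A$4$2 + A$1$4*A$2$2*A$3$1*A$4$3
- A$1$4*A$2$2*A$3$3*A$4$1 - A$1$4*A$2$3*A$3$1*A$4$2 + A$1$4*A$2$3*A$3$2*A$4$1"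
proof -
  have f1: "finite {2::4, 3, 4}" "1 \<notin> {2::4, 3, 4}" by auto
  have f2: "finite {3::4, 4}" "2 \<notin> {3::4, 4}" by auto
  have f3: "finite {4::4}" "3 \<notin> {4::4}" by auto
  show ?thesis
    unfolding det_def UNIV_4
    unfolding sum_over_permutations_insert[OF f1]
    unfolding sum_over_permutations_insert[OF f2]
    unfolding sum_over_permutations_insert[OF f3]
    unfolding permutes_sing
    by (simp add: sign_swap_id permutation_swap_id permutation_compose sign_compose sign_id swap_id_eq algebra_simps)
qed


definition qc :: "real^4 \<Rightarrow> real^4" where
  "qc p = vector [p$1, -p$2, -p$3, -p$4]"

lemma qc_comp [simp]: "qc p $ 1 = p$1" "qc p $ 2 = - p$2" "qc p $ 3 = - p$3" "qc p $ 4 = - p$4"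
  by (simp_all add: qc_def)

lemma qmult_comp [simp]:
  "qmult p q $ 1 = p$1 * q$1 - p$2 * q$2 - p$3 * q$3 - p$4 * q$4"
  "qmult p q $ 2 = p$1 * q$2 + p$2 * q$1 + p$3 * q$4 - p$4 * q$3"
  "qmult p q $ 3 = p$1 * q$3 - p$2 * q$4 + p$3 * q$1 + p$4 * q$2"
  "qmult p q $ 4 = p$1 * q$4 + p$2 * q$3 - p$3 * q$2 + p$4 * q$1"
  by (simp_all add: qmult_def)

lemma axis4 [simp]:
  "axis (1::4) (1::real) $ 1 = 1" "axis (1::4) (1::real) $ 2 = 0" "axis (1::4) (1::real) $ 3 = 0" "axis (1::4) (1::real) $ 4 = 0"
  "axis (2::4) (1::real) $ 1 = 0" "axis (2::4) (1::real) $ 2 = 1" "axis (2::4) (1::real) $ 3 = 0" "axis (2::4) (1::real) $ 4 = 0"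
  "axis (3::4) (1::real) $ 1 = 0" "axis (3::4) (1::real) $ 2 = 0" "axis (3::4) (1::real) $ 3 = 1" "axis (3::4) (1::real) $ 4 = 0"
  "axis (4::4) (1::real) $ 1 = 0" "axis (4::4) (1::real) $ 2 = 0" "axis (4::4) (1::real) $ 3 = 0" "axis (4::4) (1::real) $ 4 = 1"
  by (simp_all add: axis_def)

definition V0 :: "real^4^4 \<Rightarrow> real^4" where
  "V0 P = vector [1 + P$2$2 + P$3$3 + P$4$4, P$4$3 - P$3$4, P$2$4 - P$4$2, P$3$2 - P$2$3]"

definition V1 :: "real^4^4 \<Rightarrow> real^4" where
  "V1 P = vector [P$4$3 - P$3$4, 1 + P$2$2 - P$3$3 - P$4$4, P$2$3 + P$3$2, P$2$4 + P$4$2]"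
definition V2 :: "real^4^4 \<Rightarrow> real^4" where
  "V2 P = vector [P$2$4 - P$4$2, P$2$3 + P$3$2, 1 - P$2$2 + P$3$3 - P$4$4, P$3$4 + P$4$3]"
definition V3 :: "real^4^4 \<Rightarrow> real^4" where
  "V3 P = vector [P$3$2 - P$2$3, P$2$4 + P$4$2, P$3$4 + P$4$3, 1 - P$2$2 - P$3$3 + P$4$4]"

definition SO3b :: "real^4^4 \<Rightarrow> bool" where
  "SO3b P \<longleftrightarrow> P$1$1 = 1 \<and> P$1$2 = 0 \<and> P$1$3 = 0 \<and> P$1$4 = 0 \<and> P$2$1 = 0 \<and> P$3$1 = 0 \<and> P$4$1 = 0
   \<and> P$2$2*P$2$2+P$3$2*P$3$2+P$4$2*P$4$2 = 1
   \<and> P$2$3*P$2$3+P$3$3*P$3$3+P$4$3*P$4$3 = 1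
   \<and> P$2$4*P$2$4+P$3$4*P$3$4+P$4$4*P$4$4 = 1
   \<and> P$2$2*P$2$3+P$3$2*P$3$3+P$4$2*P$4$3 = 0
   \<and> P$2$2*P$2$4+P$3$2*P$3$4+P$4$2*P$4$4 = 0
   \<and> P$2$3*P$2$4+P$3$3*P$3$4+P$4$3*P$4$4 = 0
   \<and> P$2$2*P$2$2+P$2$3*P$2$3+P$2$4*P$2$4 = 1
   \<and> P$3$2*P$3$2+P$3$3*P$3$3+P$3$4*P$3$4 = 1
   \<and> P$4$2*P$4$2+P$4$3*P$4$3+P$4$4*P$4$4 = 1
   \<and> P$2$2*P$3$2+P$2$3*P$3$3+P$2$4*P$3$4 = 0
   \<and> P$2$2*P$4$2+P$2$3*P$4$3+P$2$4*P$4$4 = 0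
   \<and> P$3$2*P$4$2+P$3$3*P$4$3+P$3$4*P$4$4 = 0
   \<and> P$2$2 = P$3$3*P$4$4 - P$3$4*P$4$3
   \<and> P$2$3 = P$3$4*P$4$2 - P$3$2*P$4$4
   \<and> P$2$4 = P$3$2*P$4$3 - P$3$3*P$4$2
   \<and> P$3$2 = P$2$4*P$4$3 - P$2$3*P$4$4
   \<and> P$3$3 = P$2$2*P$4$4 - P$2$4*P$4$2
   \<and> P$3$4 = P$2$3*P$4$2 - P$2$2*P$4$3
   \<and> P$4$2 = P$2$3*P$3$4 - P$2$4*P$3$3
   \<and> P$4$3 = P$2$4*P$3$2 - P$2$2*P$3$4
   \<and> P$4$4 = P$2$2*P$3$3 - P$2$3*P$3$2"

lemma V0_norm:
  assumes "SO3b P"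
  shows "V0 P \<bullet> V0 P = 4 * V0 P $ 1"
  apply (simp add: V0_def inner_vec_def sum_4)
  apply (insert assms[unfolded SO3b_def])
  apply algebra
  done

lemma V0_rot:
  assumes h: "SO3b P"
  shows "qmult (qmult (V0 P) (axis j 1)) (qc (V0 P)) = (4 * V0 P $ 1) *\<^sub>R column j P"
proof -
  have "\<forall>j. qmult (qmult (V0 P) (axis j 1)) (qc (V0 P)) = (4 * V0 P $ 1) *\<^sub>R column j P"
    apply (simp add: vec_eq_iff forall_4 column_def V0_def)
    apply (insert h[unfolded SO3b_def])
    apply (intro conjI)
    apply algebra+
    done
  then show ?thesis by blast
qed

lemma V1_norm:
  assumes "SO3b P"
  shows "V1 P \<bullet> V1 P = 4 * V1 P $ 2"
  apply (simp add: V1_def inner_vec_def sum_4)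
  apply (insert assms[unfolded SO3b_def])
  apply algebra
  done

lemma V1_rot:
  assumes h: "SO3b P"
  shows "qmult (qmult (V1 P) (axis j 1)) (qc (V1 P)) = (4 * V1 P $ 2) *\<^sub>R column j P"
proof -
  have "\<forall>j. qmult (qmult (V1 P) (axis j 1)) (qc (V1 P)) = (4 * V1 P $ 2) *\<^sub>R column j P"
    apply (simp add: vec_eq_iff forall_4 column_def V1_def)
    apply (insert h[unfolded SO3b_def])
    apply (intro conjI)
    apply algebra+
    done
  then show ?thesis by blast
qed

lemma V2_norm:
  assumes "SO3b P"
  shows "V2 P \<bullet> V2 P = 4 * V2 P $ 3"
  apply (simp add: V2_def inner_vec_def sum_4)
  apply (insert assms[unfolded SO3b_def])
  apply algebra
  done

lemma V2_rot:
  assumes h: "SO3b P"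
  shows "qmult (qmult (V2 P) (axis j 1)) (qc (V2 P)) = (4 * V2 P $ 3) *\<^sub>R column j P"
proof -
  have "\<forall>j. qmult (qmult (V2 P) (axis j 1)) (qc (V2 P)) = (4 * V2 P $ 3) *\<^sub>R column j P"
    apply (simp add: vec_eq_iff forall_4 column_def V2_def)
    apply (insert h[unfolded SO3b_def])
    apply (intro conjI)
    apply algebra+
    done
  then show ?thesis by blast
qed

lemma V3_norm:
  assumes "SO3b P"
  shows "V3 P \<bullet> V3 P = 4 * V3 P $ 4"
  apply (simp add: V3_def inner_vec_def sum_4)
  apply (insert assms[unfolded SO3b_def])
  apply algebra
  done

lemma V3_rot:
  assumes h: "SO3b P"
  shows "qmult (qmult (V3 P) (axis j 1)) (qc (V3 P)) = (4 * V3 P $ 4) *\<^sub>R column j P"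
proof -
  have "\<forall>j. qmult (qmult (V3 P) (axis j 1)) (qc (V3 P)) = (4 * V3 P $ 4) *\<^sub>R column j P"
    apply (simp add: vec_eq_iff forall_4 column_def V3_def)
    apply (insert h[unfolded SO3b_def])
    apply (intro conjI)
    apply algebra+
    done
  then show ?thesis by blast
qed


lemma cof3:
  fixes s11 s12 s13 s21 s22 s23 s31 s32 s33 :: real
  assumes
    o11: "s11* s11 + s21* s21 + s31* s31 = 1"
    and o12: "s11* s12 + s21* s22 + s31* s32 = 0"
    and o13: "s11* s13 + s21* s23 + s31* s33 = 0"
    and o22: "s12* s12 + s22* s22 + s32* s32 = 1"
    and o23: "s12* s13 + s22* s23 + s32* s33 = 0"
    and o33: "s13* s13 + s23* s23 + s33* s33 = 1"
    and dt: "s11* s22* s33 + s12* s23* s31 + s13* s21* s32 - s11* s23* s32 - s12* s21* s33 - s13* s22* s31 = 1"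
  shows "s11 = (s22* s33 - s23* s32)"
    and "s21 = (- (s12* s33 - s13* s32))"
    and "s31 = (s12* s23 - s13* s22)"
    and "s12 = (- (s21* s33 - s23* s31))"
    and "s22 = (s11* s33 - s13* s31)"
    and "s32 = (- (s11* s23 - s13* s21))"
    and "s13 = (s21* s32 - s22* s31)"
    and "s23 = (- (s11* s32 - s12* s31))"
    and "s33 = (s11* s22 - s12* s21)"
proof -
  have e1: "(s22* s33 - s23* s32) = (s11* s11 + s21* s21 + s31* s31)*(s22* s33 - s23* s32) + (s11* s12 + s21* s22 + s31* s32)*(- (s21* s33 - s23* s31)) + (s11* s13 + s21* s23 + s31* s33)*(s21* s32 - s22* s31)"
    unfolding o11 o12 o13 by simp
  also have "... = s11 * (s11* s22* s33 + s12* s23* s31 + s13* s21* s32 - s11* s23* s32 - s12* s21* s33 - s13* s22* s31)" by algebra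
  also have "... = s11" unfolding dt by simp
  finally show "s11 = (s22* s33 - s23* s32)" by (rule sym)
  have e2: "(- (s12* s33 - s13* s32)) = (s11* s11 + s21* s21 + s31* s31)*(- (s12* s33 - s13* s32)) + (s11* s12 + s21* s22 + s31* s32)*(s11* s33 - s13* s31) + (s11* s13 + s21* s23 + s31* s33)*(- (s11* s32 - s12* s31))"
    unfolding o11 o12 o13 by simp
  also have "... = s21 * (s11* s22* s33 + s12* s23* s31 + s13* s21* s32 - s11* s23* s32 - s12* s21* s33 - s13* s22* s31)" by algebra
  also have "... = s21" unfolding dt by simp
  finally show "s21 = (- (s12* s33 - s13* s32))" by (rule sym)
  have e3: "(s12* s23 - s13* s22) = (s11* s11 + s21* s21 + s31* s31)*(s12* s23 - s13* s22) + (s11* s12 + s21* s22 + s31* s32)*(- (s11* s23 - s13* s21)) + (s11* s13 + s21* s23 + s31* s33)*(s11* s22 - s12* s21)"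
    unfolding o11 o12 o13 by simp
  also have "... = s31 * (s11* s22* s33 + s12* s23* s31 + s13* s21* s32 - s11* s23* s32 - s12* s21* s33 - s13* s22* s31)" by algebra
  also have "... = s31" unfolding dt by simp
  finally show "s31 = (s12* s23 - s13* s22)" by (rule sym)
  have e4: "(- (s21* s33 - s23* s31)) = (s11* s12 + s21* s22 + s31* s32)*(s22* s33 - s23* s32) + (s12* s12 + s22* s22 + s32* s32)*(- (s21* s33 - s23* s31)) + (s12* s13 + s22* s23 + s32* s33)*(s21* s32 - s22* s31)"
    unfolding o12 o22 o23 by simp
  also have "... = s12 * (s11* s22* s33 + s12* s23* s31 + s13* s21* s32 - s11* s23* s32 - s12* s21* s33 - s13* s22* s31)" by algebra
  also have "... = s12" unfolding dt by simp
  finally show "s12 = (- (s21* s33 - s23* s31))" by (rule sym)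
  have e5: "(s11* s33 - s13* s31) = (s11* s12 + s21* s22 + s31* s32)*(- (s12* s33 - s13* s32)) + (s12* s12 + s22* s22 + s32* s32)*(s11* s33 - s13* s31) + (s12* s13 + s22* s23 + s32* s33)*(- (s11* s32 - s12* s31))"
    unfolding o12 o22 o23 by simp
  also have "... = s22 * (s11* s22* s33 + s12* s23* s31 + s13* s21* s32 - s11* s23* s32 - s12* s21* s33 - s13* s22* s31)" by algebra
  also have "... = s22" unfolding dt by simp
  finally show "s22 = (s11* s33 - s13* s31)" by (rule sym)
  have e6: "(- (s11* s23 - s13* s21)) = (s11* s12 + s21* s22 + s31* s32)*(s12* s23 - s13* s22) + (s12* s12 + s22* s22 + s32* s32)*(- (s11* s23 - s13* s21)) + (s12* s13 + s22* s23 + s32* s33)*(s11* s22 - s12* s21)"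
    unfolding o12 o22 o23 by simp
  also have "... = s32 * (s11* s22* s33 + s12* s23* s31 + s13* s21* s32 - s11* s23* s32 - s12* s21* s33 - s13* s22* s31)" by algebra
  also have "... = s32" unfolding dt by simp
  finally show "s32 = (- (s11* s23 - s13* s21))" by (rule sym)
  have e7: "(s21* s32 - s22* s31) = (s11* s13 + s21* s23 + s31* s33)*(s22* s33 - s23* s32) + (s12* s13 + s22* s23 + s32* s33)*(- (s21* s33 - s23* s31)) + (s13* s13 + s23* s23 + s33* s33)*(s21* s32 - s22* s31)"
    unfolding o13 o23 o33 by simp
  also have "... = s13 * (s11* s22* s33 + s12* s23* s31 + s13* s21* s32 - s11* s23* s32 - s12* s21* s33 - s13* s22* s31)" by algebra
  also have "... = s13" unfolding dt by simp
  finally show "s13 = (s21* s32 - s22* s31)" by (rule sym)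
  have e8: "(- (s11* s32 - s12* s31)) = (s11* s13 + s21* s23 + s31* s33)*(- (s12* s33 - s13* s32)) + (s12* s13 + s22* s23 + s32* s33)*(s11* s33 - s13* s31) + (s13* s13 + s23* s23 + s33* s33)*(- (s11* s32 - s12* s31))"
    unfolding o13 o23 o33 by simp
  also have "... = s23 * (s11* s22* s33 + s12* s23* s31 + s13* s21* s32 - s11* s23* s32 - s12* s21* s33 - s13* s22* s31)" by algebra
  also have "... = s23" unfolding dt by simp
  finally show "s23 = (- (s11* s32 - s12* s31))" by (rule sym)
  have e9: "(s11* s22 - s12* s21) = (s11* s13 + s21* s23 + s31* s33)*(s12* s23 - s13* s22) + (s12* s13 + s22* s23 + s32* s33)*(- (s11* s23 - s13* s21)) + (s13* s13 + s23* s23 + s33* s33)*(s11* s22 - s12* s21)"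
    unfolding o13 o23 o33 by simp
  also have "... = s33 * (s11* s22* s33 + s12* s23* s31 + s13* s21* s32 - s11* s23* s32 - s12* s21* s33 - s13* s22* s31)" by algebra
  also have "... = s33" unfolding dt by simp
  finally show "s33 = (s11* s22 - s12* s21)" by (rule sym)
qed


definition Lm :: "real^4 \<Rightarrow> real^4^4" where "Lm b = (\<chi> i j. qmult b (axis j 1) $ i)"
definition Rp :: "real^4^4 \<Rightarrow> real^4^4" where "Rp R = Lm (qc (column 1 R)) ** R"

lemma orth_scalar:
  assumes "orthogonal_matrix (P::real^4^4)"
  shows "P$1$i*P$1$j + P$2$i*P$2$j + P$3$i*P$3$j + P$4$i*P$4$j = (if i = j then 1 else 0)"
    and "P$i$1*P$j$1 + P$i$2*P$j$2 + P$i$3*P$j$3 + P$i$4*P$j$4 = (if i = j then 1 else 0)"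
proof -
  from assms have "(transpose P ** P) $ i $ j = mat 1 $ i $ j" "(P ** transpose P) $ i $ j = mat 1 $ i $ j"
    by (simp_all add: orthogonal_matrix_def)
  then show "P$1$i*P$1$j + P$2$i*P$2$j + P$3$i*P$3$j + P$4$i*P$4$j = (if i = j then 1 else 0)"
    and "P$i$1*P$j$1 + P$i$2*P$j$2 + P$i$3*P$j$3 + P$i$4*P$j$4 = (if i = j then 1 else 0)"
    by (simp_all add: matrix_matrix_mult_def transpose_def mat_def sum_4)
qed

lemma Lm_orth:
  assumes "b$1*b$1+b$2*b$2+b$3*b$3+b$4*b$4 = 1"
  shows "orthogonal_matrix (Lm b)"
  unfolding orthogonal_matrix
  apply (simp add: vec_eq_iff forall_4 matrix_matrix_mult_def sum_4 Lm_def transpose_def mat_def)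
  apply (insert assms)
  apply (intro conjI)
  apply algebra+
  done

lemma det_Lm: "det (Lm b) = (b$1*b$1+b$2*b$2+b$3*b$3+b$4*b$4)^2"
  apply (simp add: det_4 Lm_def)
  apply algebra
  done

lemma Lm_inv:
  assumes "b$1*b$1+b$2*b$2+b$3*b$3+b$4*b$4 = 1"
  shows "Lm b ** Lm (qc b) = mat 1"
  apply (simp add: vec_eq_iff forall_4 matrix_matrix_mult_def sum_4 Lm_def mat_def)
  apply (insert assms)
  apply (intro conjI)
  apply algebra+
  done

lemma SO4_norm_col1:
  assumes "R \<in> SO4"
  shows "R$1$1*R$1$1+R$2$1*R$2$1+R$3$1*R$3$1+R$4$1*R$4$1 = 1"
  using orth_scalar(1)[of R 1 1] assms by (simp add: SO4_def)

lemma R_Lm_Rp: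
  assumes "R \<in> SO4"
  shows "Lm (column 1 R) ** Rp R = R"
proof -
  have "Lm (column 1 R) ** Lm (qc (column 1 R)) = mat 1"
    by (rule Lm_inv) (use SO4_norm_col1[OF assms] in \<open>simp add: column_def\<close>)
  then show ?thesis unfolding Rp_def by (simp add: matrix_mul_assoc)
qed

lemma SO4_SO3b:
  assumes "R \<in> SO4"
  shows "SO3b (Rp R)"
proof -
  define P where "P = Rp R"
  have na: "R$1$1*R$1$1+R$2$1*R$2$1+R$3$1*R$3$1+R$4$1*R$4$1 = 1" by (rule SO4_norm_col1[OF assms])
  have nq: "qc (column 1 R)$1*qc (column 1 R)$1+qc (column 1 R)$2*qc (column 1 R)$2
     +qc (column 1 R)$3*qc (column 1 R)$3+qc (column 1 R)$4*qc (column 1 R)$4 = 1"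
    using na by (simp add: column_def)
  have oP: "orthogonal_matrix P"
    unfolding P_def Rp_def
    by (rule orthogonal_matrix_mul[OF Lm_orth[OF nq]]) (use assms in \<open>simp add: SO4_def\<close>)
  have dP: "det P = 1"
    unfolding P_def Rp_def det_mul det_Lm nq using assms by (simp add: SO4_def)
  have p11: "P$1$1 = 1"
    using na by (simp add: P_def Rp_def matrix_matrix_mult_def sum_4 Lm_def column_def)
  have pc: "P$2$1 = 0" "P$3$1 = 0" "P$4$1 = 0"
    by (simp_all add: P_def Rp_def matrix_matrix_mult_def sum_4 Lm_def column_def algebra_simps)
  have r1: "P$1$1*P$1$1 + P$1$2*P$1$2 + P$1$3*P$1$3 + P$1$4*P$1$4 = 1"
    using orth_scalar(2)[OF oP, of 1 1] by simp
  then have "P$1$2*P$1$2 + P$1$3*P$1$3 + P$1$4*P$1$4 = 0" using p11 by simp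
  then have pr: "P$1$2 = 0" "P$1$3 = 0" "P$1$4 = 0"
    by (smt (verit) zero_le_square mult_eq_0_iff)+
  have dS: "P$2$2*P$3$3*P$4$4 + P$2$3*P$3$4*P$4$2 + P$2$4*P$3$2*P$4$3 - P$2$2*P$3$4*P$4$3 - P$2$3*P$3$2*P$4$4 - P$2$4*P$3$3*P$4$2 = 1"
    using dP unfolding det_4 p11 pc pr by (simp add: algebra_simps)
  have oc: "P$2$i*P$2$j + P$3$i*P$3$j + P$4$i*P$4$j = (if i = j then 1 else 0)"
    if "i \<noteq> 1" "j \<noteq> 1" for i j
  proof -
    have "P$1$i = 0" "P$1$j = 0" using pr that exhaust_4[of i] exhaust_4[of j] by auto
    then show ?thesis using orth_scalar(1)[OF oP, of i j] by simp
  qed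
  have orr: "P$i$2*P$j$2 + P$i$3*P$j$3 + P$i$4*P$j$4 = (if i = j then 1 else 0)"
    if "i \<noteq> 1" "j \<noteq> 1" for i j
  proof -
    have "P$i$1 = 0" "P$j$1 = 0" using pc that exhaust_4[of i] exhaust_4[of j] by auto
    then show ?thesis using orth_scalar(2)[OF oP, of i j] by simp
  qed
  have o1: "P$2$2*P$2$2 + P$3$2*P$3$2 + P$4$2*P$4$2 = 1" using oc[of 2 2] by simp
  have o2: "P$2$2*P$2$3 + P$3$2*P$3$3 + P$4$2*P$4$3 = 0" using oc[of 2 3] by simp
  have o3: "P$2$2*P$2$4 + P$3$2*P$3$4 + P$4$2*P$4$4 = 0" using oc[of 2 4] by simp
  have o4: "P$2$3*P$2$3 + P$3$3*P$3$3 + P$4$3*P$4$3 = 1" using oc[of 3 3] by simp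
  have o5: "P$2$3*P$2$4 + P$3$3*P$3$4 + P$4$3*P$4$4 = 0" using oc[of 3 4] by simp
  have o6: "P$2$4*P$2$4 + P$3$4*P$3$4 + P$4$4*P$4$4 = 1" using oc[of 4 4] by simp
  have w1: "P$2$2*P$2$2 + P$2$3*P$2$3 + P$2$4*P$2$4 = 1" using orr[of 2 2] by simp
  have w2: "P$2$2*P$3$2 + P$2$3*P$3$3 + P$2$4*P$3$4 = 0" using orr[of 2 3] by simp
  have w3: "P$2$2*P$4$2 + P$2$3*P$4$3 + P$2$4*P$4$4 = 0" using orr[of 2 4] by simp
  have w4: "P$3$2*P$3$2 + P$3$3*P$3$3 + P$3$4*P$3$4 = 1" using orr[of 3 3] by simp
  have w5: "P$3$2*P$4$2 + P$3$3*P$4$3 + P$3$4*P$4$4 = 0" using orr[of 3 4] by simp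
  have w6: "P$4$2*P$4$2 + P$4$3*P$4$3 + P$4$4*P$4$4 = 1" using orr[of 4 4] by simp
  note cf = cof3[OF o1 o2 o3 o4 o5 o6 dS]
  have c0: "P$2$2 = P$3$3*P$4$4 - P$3$4*P$4$3" using cf by linarith
  have c1: "P$2$3 = P$3$4*P$4$2 - P$3$2*P$4$4" using cf by linarith
  have c2: "P$2$4 = P$3$2*P$4$3 - P$3$3*P$4$2" using cf by linarith
  have c3: "P$3$2 = P$2$4*P$4$3 - P$2$3*P$4$4" using cf by linarith
  have c4: "P$3$3 = P$2$2*P$4$4 - P$2$4*P$4$2" using cf by linarith
  have c5: "P$3$4 = P$2$3*P$4$2 - P$2$2*P$4$3" using cf by linarith
  have c6: "P$4$2 = P$2$3*P$3$4 - P$2$4*P$3$3" using cf by linarith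
  have c7: "P$4$3 = P$2$4*P$3$2 - P$2$2*P$3$4" using cf by linarith
  have c8: "P$4$4 = P$2$2*P$3$3 - P$2$3*P$3$2" using cf by linarith
  show ?thesis
    unfolding P_def[symmetric] SO3b_def
    using p11 pc pr o1 o2 o3 o4 o5 o6 w1 w2 w3 w4 w5 w6 c0 c1 c2 c3 c4 c5 c6 c7 c8
    apply (intro conjI)
    apply assumption+
    done
qed


definition Vq :: "4 \<Rightarrow> real^4^4 \<Rightarrow> real^4" where
  "Vq k P = (if k = 1 then V0 P else if k = 2 then V1 P else if k = 3 then V2 P else V3 P)"

lemma Vq_norm: "SO3b P \<Longrightarrow> Vq k P \<bullet> Vq k P = 4 * Vq k P $ k"
  using exhaust_4[of k] V0_norm V1_norm V2_norm V3_norm by (auto simp: Vq_def)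

lemma Vq_rot: "SO3b P \<Longrightarrow>
   qmult (qmult (Vq k P) (axis j 1)) (qc (Vq k P)) = (4 * Vq k P $ k) *\<^sub>R column j P"
  using exhaust_4[of k] V0_rot V1_rot V2_rot V3_rot by (auto simp: Vq_def)

lemma Vq_sum: "Vq 1 P $ 1 + Vq 2 P $ 2 + Vq 3 P $ 3 + Vq 4 P $ 4 = 4"
  by (simp add: Vq_def V0_def V1_def V2_def V3_def)

definition Wq :: "4 \<Rightarrow> real^4^4 \<Rightarrow> real^4" where
  "Wq k R = Vq k (Rp R) + max 0 (2 - norm (Vq k (Rp R))) *\<^sub>R axis k 1"

definition Qk :: "4 \<Rightarrow> real^4^4 \<Rightarrow> real^4" where
  "Qk k R = (1 / norm (Wq k R)) *\<^sub>R Wq k R"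

definition G :: "4 \<Rightarrow> real^4^4 \<Rightarrow> (real^4) \<times> (real^4)" where
  "G k R = (qmult (column 1 R) (Qk k R), qc (Qk k R))"

lemma qmult_assoc3:
  "qmult (qmult (qmult a q) p) (qc q) = qmult a (qmult (qmult q p) (qc q))"
  by (simp add: vec_eq_iff forall_4 algebra_simps)

lemma qmult_scale:
  "qmult (qmult (c *\<^sub>R v) p) (qc (c *\<^sub>R v)) = (c*c) *\<^sub>R qmult (qmult v p) (qc v)"
  by (simp add: vec_eq_iff forall_4 algebra_simps)

lemma qmult_scale2: "qmult a (c *\<^sub>R v) = c *\<^sub>R qmult a v"
  by (simp add: vec_eq_iff forall_4 algebra_simps)

lemma column_Lm: "column j (Lm b ** P) = qmult b (column j P)"
  by (simp add: vec_eq_iff forall_4 matrix_matrix_mult_def sum_4 Lm_def column_def algebra_simps)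

lemma qmult_inner: "qmult p q \<bullet> qmult p q = (p \<bullet> p) * (q \<bullet> q)"
  by (simp add: inner_vec_def sum_4 algebra_simps)

lemma qc_inner: "qc p \<bullet> qc p = p \<bullet> p"
  by (simp add: inner_vec_def sum_4)

lemma R_QQ_entry: "R_QQ x $ i $ j = qmult (qmult (fst x) (axis j 1)) (snd x) $ i"
  by (simp add: R_QQ_def matrix_def)


lemma correct:
  assumes R: "R \<in> SO4" and big: "norm (Vq k (Rp R)) \<ge> 2"
  shows "R_QQ (G k R) = R"
proof -
  define P where "P = Rp R"
  define v where "v = Vq k P"
  have so3: "SO3b P" unfolding P_def by (rule SO4_SO3b[OF R])
  have W: "Wq k R = v" using big unfolding Wq_def v_def P_def by simp
  have nv: "v \<bullet> v = 4 * v $ k" unfolding v_def by (rule Vq_norm[OF so3])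
  have "v \<noteq> 0" using big unfolding v_def P_def by auto
  then have vpos: "v \<bullet> v > 0" by simp
  have nn: "norm v * norm v = v \<bullet> v" by (simp add: norm_eq_sqrt_inner)
  have col: "qmult (qmult (Qk k R) (axis j 1)) (qc (Qk k R)) = column j P" for j
  proof -
    have "qmult (qmult (Qk k R) (axis j 1)) (qc (Qk k R))
        = ((1 / norm v) * (1 / norm v)) *\<^sub>R ((4 * v $ k) *\<^sub>R column j P)"
      unfolding Qk_def W qmult_scale v_def P_def using Vq_rot[OF so3] P_def by simp
    also have "... = column j P"
      using nv nn vpos by (simp add: field_simps)
    finally show ?thesis .
  qed
  show ?thesis
  proof (simp add: vec_eq_iff, intro allI)
    fix i j
    have "R_QQ (G k R) $ i $ j = qmult (column 1 R) (column j P) $ i"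
      unfolding R_QQ_entry G_def by (simp add: qmult_assoc3 col)
    also have "... = column j (Lm (column 1 R) ** P) $ i" by (simp add: column_Lm)
    also have "... = R $ i $ j" unfolding P_def R_Lm_Rp[OF R] by (simp add: column_def)
    finally show "R_QQ (G k R) $ i $ j = R $ i $ j" .
  qed
qed

lemma Vk_nonneg:
  assumes "R \<in> SO4" shows "Vq k (Rp R) $ k \<ge> 0"
proof -
  have "Vq k (Rp R) \<bullet> Vq k (Rp R) = 4 * Vq k (Rp R) $ k" by (rule Vq_norm[OF SO4_SO3b[OF assms]])
  then show ?thesis using inner_ge_zero[of "Vq k (Rp R)"] by linarith
qed

lemma W_nonzero:
  assumes R: "R \<in> SO4" shows "Wq k R \<noteq> 0"
proof
  assume W0: "Wq k R = 0"
  define v where "v = Vq k (Rp R)"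
  define c where "c = max 0 (2 - norm v)"
  have "Wq k R $ k = v $ k + c" unfolding Wq_def v_def c_def by simp
  then have "v $ k + c = 0" using W0 by simp
  moreover have "v $ k \<ge> 0" unfolding v_def by (rule Vk_nonneg[OF R])
  moreover have "c \<ge> 0" unfolding c_def by simp
  ultimately have "c = 0" "v $ k = 0" by linarith+
  then have "norm v \<ge> 2" unfolding c_def by linarith
  moreover have "v \<bullet> v = 0" using \<open>v $ k = 0\<close> Vq_norm[OF SO4_SO3b[OF R], of k] unfolding v_def by simp
  ultimately show False by simp
qed

lemma G_S3:
  assumes R: "R \<in> SO4" shows "G k R \<in> S3 \<times> S3"
proof -
  have nq: "Qk k R \<bullet> Qk k R = 1"
    using W_nonzero[OF R, of k] unfolding Qk_def
    by (simp add: inner_scaleR_left inner_scaleR_right power2_norm_eq_inner[symmetric] field_simps power2_eq_square)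
  have na: "column 1 R \<bullet> column 1 R = 1"
    using SO4_norm_col1[OF R] by (simp add: inner_vec_def sum_4 column_def)
  show ?thesis
    unfolding G_def S3_def mem_Times_iff fst_conv snd_conv mem_sphere dist_0_norm
    using nq na by (simp add: norm_eq_sqrt_inner qmult_inner qc_inner)
qed

lemma cover:
  assumes R: "R \<in> SO4" shows "\<exists>k. norm (Vq k (Rp R)) \<ge> 2"
proof -
  have s: "SO3b (Rp R)" by (rule SO4_SO3b[OF R])
  have "\<exists>k. Vq k (Rp R) $ k \<ge> 1"
  proof (rule ccontr)
    assume "\<not> ?thesis"
    then have "Vq 1 (Rp R) $ 1 < 1" "Vq 2 (Rp R) $ 2 < 1" "Vq 3 (Rp R) $ 3 < 1" "Vq 4 (Rp R) $ 4 < 1"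
      by (auto simp: not_le)
    then show False using Vq_sum[of "Rp R"] by linarith
  qed
  then obtain k where k: "Vq k (Rp R) $ k \<ge> 1" by blast
  have "(2::real)^2 \<le> Vq k (Rp R) \<bullet> Vq k (Rp R)"
    using Vq_norm[OF s, of k] k by simp
  then have "norm (Vq k (Rp R)) \<ge> 2"
    unfolding norm_eq_sqrt_inner by (rule real_le_rsqrt)
  then show ?thesis by blast
qed


lemma cont_vec4:
  fixes f :: "'a::topological_space \<Rightarrow> 'b::topological_space^'n"
  assumes "\<And>i. continuous_on S (\<lambda>x. f x $ i)"
  shows "continuous_on S f"
proof -
  have "continuous_on S (\<lambda>x. \<chi> i. f x $ i)" by (rule continuous_on_vec_lambda) (rule assms)
  then show ?thesis by simp
qed

lemma cont_qmult:
  assumes "continuous_on S f" "continuous_on S g"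
  shows "continuous_on S (\<lambda>x. qmult (f x) (g x))"
proof (rule cont_vec4)
  fix i :: 4
  show "continuous_on S (\<lambda>x. qmult (f x) (g x) $ i)"
    using exhaust_4[of i] by (elim disjE) (simp_all, (intro continuous_intros assms)+)
qed

lemma cont_qc:
  assumes "continuous_on S f"
  shows "continuous_on S (\<lambda>x. qc (f x))"
proof (rule cont_vec4)
  fix i :: 4
  show "continuous_on S (\<lambda>x. qc (f x) $ i)"
    using exhaust_4[of i] by (elim disjE) (simp_all, (intro continuous_intros assms)+)
qed

lemma cont_column: "continuous_on S (\<lambda>R::real^4^4. column j R)"
  unfolding column_def by (intro continuous_intros)

lemma cont_Rp: "continuous_on S Rp"
proof -
  have "Rp = (\<lambda>R. \<chi> i j. \<Sum>k\<in>UNIV. qmult (qc (column 1 R)) (axis k 1) $ i * R $ k $ j)"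
    by (simp add: fun_eq_iff Rp_def matrix_matrix_mult_def Lm_def)
  moreover have "continuous_on S (\<lambda>R::real^4^4. \<chi> i j. \<Sum>k\<in>UNIV. qmult (qc (column 1 R)) (axis k 1) $ i * R $ k $ j)"
    by (intro continuous_intros cont_qmult cont_qc cont_column)
  ultimately show ?thesis by metis
qed

lemma cont_Vq: "continuous_on S (\<lambda>R. Vq k (Rp R))"
proof -
  have c: "continuous_on S (\<lambda>R. Rp R $ i $ j)" for i j
    by (intro continuous_intros cont_Rp)
  have "continuous_on S (\<lambda>R. V0 (Rp R))"
  proof (rule cont_vec4)
    fix i :: 4
    show "continuous_on S (\<lambda>x. V0 (Rp x) $ i)"
      using exhaust_4[of i] by (elim disjE) (simp_all add: V0_def, (intro continuous_intros c)+)
  qed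
  moreover have "continuous_on S (\<lambda>R. V1 (Rp R))"
  proof (rule cont_vec4)
    fix i :: 4
    show "continuous_on S (\<lambda>x. V1 (Rp x) $ i)"
      using exhaust_4[of i] by (elim disjE) (simp_all add: V1_def, (intro continuous_intros c)+)
  qed
  moreover have "continuous_on S (\<lambda>R. V2 (Rp R))"
  proof (rule cont_vec4)
    fix i :: 4
    show "continuous_on S (\<lambda>x. V2 (Rp x) $ i)"
      using exhaust_4[of i] by (elim disjE) (simp_all add: V2_def, (intro continuous_intros c)+)
  qed
  moreover have "continuous_on S (\<lambda>R. V3 (Rp R))"
  proof (rule cont_vec4)
    fix i :: 4
    show "continuous_on S (\<lambda>x. V3 (Rp x) $ i)"
      using exhaust_4[of i] by (elim disjE) (simp_all add: V3_def, (intro continuous_intros c)+)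
  qed
  ultimately have "continuous_on S (\<lambda>R. V0 (Rp R))" "continuous_on S (\<lambda>R. V1 (Rp R))" "continuous_on S (\<lambda>R. V2 (Rp R))" "continuous_on S (\<lambda>R. V3 (Rp R))" by blast+
  then show ?thesis using exhaust_4[of k] by (auto simp: Vq_def)
qed

lemma cont_G: "continuous_on SO4 (G k)"
proof -
  have w: "continuous_on SO4 (Wq k)"
    unfolding Wq_def[abs_def] by (intro continuous_intros cont_Vq)
  have q: "continuous_on SO4 (Qk k)"
    unfolding Qk_def[abs_def]
    by (intro continuous_intros w) (use W_nonzero in auto)
  show ?thesis
    unfolding G_def[abs_def] by (intro continuous_intros cont_qmult cont_qc cont_column q)
qed

theorem theorem14:
  shows "\<exists>g1 g2 g3 g4 :: real^4^4 \<Rightarrow> (real^4) \<times> (real^4).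
     (\<forall>g \<in> {g1, g2, g3, g4}. continuous_on SO4 g \<and> g ` SO4 \<subseteq> S3 \<times> S3) \<and>
     (\<forall>R \<in> SO4. \<exists>g \<in> {g1, g2, g3, g4}. R_QQ (g R) = R)"
proof -
  have A: "\<forall>g\<in>{G 1, G 2, G 3, G 4}. continuous_on SO4 g \<and> g ` SO4 \<subseteq> S3 \<times> S3"
    using cont_G G_S3 by blast
  have B: "\<forall>R\<in>SO4. \<exists>g\<in>{G 1, G 2, G 3, G 4}. R_QQ (g R) = R"
  proof
    fix R assume R: "R \<in> SO4"
    then obtain k where k: "norm (Vq k (Rp R)) \<ge> 2" using cover by blast
    have "G k \<in> {G 1, G 2, G 3, G 4}" using exhaust_4[of k] by auto
    then show "\<exists>g \<in> {G 1, G 2, G 3, G 4}. R_QQ (g R) = R"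
      using correct[OF R k] by blast
  qed
  show ?thesis using A B by blast
qed
end
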